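(* For a positive integer $n$ let \[ A_n:=\sum_{k=0}^{n-1}(-1)^{n-1-k}\binom{2k}{k}^5(205k^2+160k+32). \] Then \[ A_n=16n\binom{2n}{n}\sum_{k=0}^{n-1}\binom{n+k-1}{k}^4(2k+n) \quad\text{and}\quad A_n=8n^2\binom{2n}{n}^2\sum_{k=0}^{n-1}(-1)^k\binom{2n-1}{n+k}\binom{2n-k-2}{n-k-1}^2 . \] *)

theory Defs
  imports Main
begin

definition A :: "nat \<Rightarrow> int" where
  "A n = (\<Sum>k<n. (-1) ^ (n - 1 - k) * (int ((2*k) choose k)) ^ 5
          * (205 * int k ^ 2 + 160 * int k + 32))"

end

theory Submission
  imports Defs
begin

lemma binL: "int (Suc k) * int (N choose Suc k) = (int N - int k) * int (N choose k)"
proof -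
  have "Suc N * (N choose k) = (Suc N choose Suc k) * Suc k" by (rule Suc_times_binomial_eq)
  also have "Suc N choose Suc k = (N choose k) + (N choose Suc k)" by simp
  finally have h: "Suc N * (N choose k) = ((N choose k) + (N choose Suc k)) * Suc k" .
  from arg_cong[OF h, of int] show ?thesis by (simp add: algebra_simps)
qed

lemma binS: "int (Suc k) * int (Suc N choose Suc k) = int (Suc N) * int (N choose k)"
proof -
  have h: "Suc N * (N choose k) = (Suc N choose Suc k) * Suc k" by (rule Suc_times_binomial_eq)
  from arg_cong[OF h, of int] show ?thesis by (simp add: algebra_simps)
qed

lemma half: assumes "n \<ge> 1" shows "int ((2*n) choose n) = 2 * int ((2*n-1) choose n)"
proof -
  obtain p where p: "n = Suc p" using assms by (cases n) auto
  have "(2*n) choose n = (Suc (2*p+1) choose Suc p)" using p by simp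
  also have "\<dots> = ((2*p+1) choose p) + ((2*p+1) choose Suc p)" by simp
  also have "(2*p+1) choose Suc p = (2*p+1) choose p"
    using binomial_symmetric[of "Suc p" "2*p+1"] by simp
  finally show ?thesis using p by simp
qed

lemma cs: "int (Suc n) * int ((2*Suc n) choose Suc n) = 2*(2*int n+1) * int ((2*n) choose n)"
proof -
  have e1: "int (Suc n) * int (Suc (2*n+1) choose Suc n) = int (Suc (2*n+1)) * int ((2*n+1) choose n)"
    by (rule binS)
  have e2: "int (Suc n) * int (Suc (2*n) choose Suc n) = int (Suc (2*n)) * int ((2*n) choose n)"
    by (rule binS)
  have sy: "(Suc (2*n) choose Suc n) = (2*n+1) choose n"
    using binomial_symmetric[of "Suc n" "2*n+1"] by simp
  have "int (Suc n) * (int (Suc n) * int ((2*Suc n) choose Suc n))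
      = int (Suc n) * (2*(2*int n+1) * int ((2*n) choose n))"
    using e1 e2 sy by (simp add: algebra_simps)
  thus ?thesis by simp
qed


definition F1 :: "nat \<Rightarrow> nat \<Rightarrow> int" where
  "F1 n k = int ((n+k-1) choose k)^4 * (2*int k + int n)"

lemma poly1: "(q M) * M^4 + 2*(2*x+1)*(x+M)^4*(2*M+x+1) + x^5*(2*M+x) = (x+M)^4 * (q (M+1))"
  if "\<And>y. q y = 5*x^2 + 6*x*y + 2*y^2" for x M :: int and q
  unfolding that by algebra

lemma tel1: "(\<Sum>k<Suc m. 2*(2*int n+1)*F1 (Suc n) k + int n * F1 n k)
   = int ((n+m) choose m)^4 * (5*int n^2 + 6*int n*(int m+1) + 2*(int m+1)^2)"
proof (induction m)
  case 0
  then show ?case by (simp add: F1_def algebra_simps power2_eq_square)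
next
  case (Suc m)
  define c where "c = int ((n+m) choose m)"
  define a where "a = int ((n+m+1) choose (m+1))"
  define b where "b = int ((n+m) choose (m+1))"
  have ea: "(int m+1) * a = (int n + int m + 1) * c"
    using binS[of m "n+m"] unfolding a_def c_def by (simp del: binomial_Suc_Suc add: algebra_simps)
  have eb: "(int m+1) * b = int n * c"
    using binL[of m "n+m"] unfolding b_def c_def by (simp add: algebra_simps)
  have f1: "F1 (Suc n) (Suc m) = a^4 * (2*(int m+1) + int n + 1)"
    unfolding F1_def a_def by simp
  have f2: "F1 n (Suc m) = b^4 * (2*(int m+1) + int n)"
    unfolding F1_def b_def by simp
  have g: "int ((n + Suc m) choose Suc m) = a" unfolding a_def by simp
  define q where "q = (\<lambda>y::int. 5*int n^2 + 6*int n*y + 2*y^2)"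
  have key: "c^4 * q (int m + 1) + 2*(2*int n+1)*(a^4 * (2*(int m+1) + int n + 1))
      + int n * (b^4 * (2*(int m+1) + int n)) = a^4 * q (int m + 2)"
  proof -
    have M: "(int m + 1)^4 > 0" by simp
    have pa: "(int m+1)^4 * a^4 = (int n + int m + 1)^4 * c^4"
      using ea by (metis power_mult_distrib)
    have pb: "(int m+1)^4 * b^4 = int n^4 * c^4"
      using eb by (metis power_mult_distrib)
    have "(int m + 1)^4 * (c^4 * q (int m + 1) + 2*(2*int n+1)*(a^4 * (2*(int m+1) + int n + 1))
      + int n * (b^4 * (2*(int m+1) + int n)))
      = c^4 * (q (int m + 1) * (int m+1)^4) + 2*(2*int n+1)*(2*(int m+1) + int n + 1)*((int m+1)^4 * a^4)
        + int n * (2*(int m+1) + int n) * ((int m+1)^4 * b^4)"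
      by (simp add: algebra_simps)
    also have "\<dots> = c^4 * (q (int m + 1) * (int m+1)^4 + 2*(2*int n+1)*(int n + (int m + 1))^4*(2*(int m+1) + int n + 1)
        + int n^5 * (2*(int m+1) + int n))"
      unfolding pa pb by (simp add: algebra_simps power_add numeral_eq_Suc)
    also have "\<dots> = c^4 * ((int n + (int m+1))^4 * q (int m + 1 + 1))"
      using poly1[of q "int n" "int m + 1"] q_def by simp
    also have "\<dots> = (int m + 1)^4 * (a^4 * q (int m + 2))"
      using pa by (simp add: algebra_simps)
    finally show ?thesis using M by simp
  qed
  show ?case
    apply (subst sum.lessThan_Suc)
    apply (subst Suc.IH)
    using key f1 f2 g unfolding c_def q_def
    by (simp add: algebra_simps)
qed


lemma Arec: "A (Suc n) = - A n + int ((2*n) choose n)^5 * (205 * int n^2 + 160 * int n + 32)"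
proof -
  have "(\<Sum>k<n. (-1) ^ (Suc n - 1 - k) * (int ((2*k) choose k)) ^ 5 * (205 * int k ^ 2 + 160 * int k + 32))
      = (\<Sum>k<n. - ((-1) ^ (n - 1 - k) * (int ((2*k) choose k)) ^ 5 * (205 * int k ^ 2 + 160 * int k + 32)))"
  proof (rule sum.cong)
    fix k assume "k \<in> {..<n}"
    hence "Suc n - 1 - k = Suc (n - 1 - k)" by auto
    thus "(-1) ^ (Suc n - 1 - k) * (int ((2*k) choose k)) ^ 5 * (205 * int k ^ 2 + 160 * int k + 32)
      = - ((-1) ^ (n - 1 - k) * (int ((2*k) choose k)) ^ 5 * (205 * int k ^ 2 + 160 * int k + 32))"
      by simp
  qed simp
  thus ?thesis unfolding A_def by (simp add: sum_negf)
qed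

definition SS :: "nat \<Rightarrow> int" where "SS n = (\<Sum>k<n. F1 n k)"
definition BB :: "nat \<Rightarrow> int" where "BB n = 16 * int n * int ((2*n) choose n) * SS n"

lemma Brec: "BB (Suc n) + BB n = int ((2*n) choose n)^5 * (205 * int n^2 + 160 * int n + 32)"
proof -
  define C where "C = int ((2*n) choose n)"
  have s1: "(\<Sum>k<Suc n. 2*(2*int n+1)*F1 (Suc n) k + int n * F1 n k)
      = 2*(2*int n+1)*SS (Suc n) + int n * (SS n + F1 n n)"
    unfolding SS_def by (simp add: sum.distrib distrib_left flip: sum_distrib_left)
  have C2: "int ((n+n) choose n) = C" unfolding C_def by (simp add: mult_2)
  have t: "2*(2*int n+1)*SS (Suc n) + int n * SS n + int n * F1 n n
       = C^4 * (5*int n^2 + 6*int n*(int n+1) + 2*(int n+1)^2)"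
    using tel1[of n n] unfolding s1 C2 by (simp add: algebra_simps)
  have ff: "16 * (int n * F1 n n) = 3 * int n^2 * C^4"
  proof (cases "n = 0")
    case True thus ?thesis by (simp add: F1_def)
  next
    case False
    hence "C = 2 * int ((2*n-1) choose n)" unfolding C_def by (intro half) simp
    moreover have "n + n - 1 = 2*n-1" by simp
    ultimately show ?thesis unfolding F1_def by (simp add: algebra_simps power2_eq_square)
  qed
  have "BB (Suc n) = 16 * (int (Suc n) * int ((2*Suc n) choose Suc n)) * SS (Suc n)"
    unfolding BB_def by (simp only: mult.assoc)
  also have "\<dots> = 16 * (2*(2*int n+1) * C) * SS (Suc n)"
    unfolding C_def by (simp only: cs)
  finally have b1: "BB (Suc n) = 16 * (2*(2*int n+1) * C) * SS (Suc n)" .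
  have t': "2*(2*int n+1)*SS (Suc n) + int n * SS n = C^4 * (5*int n^2 + 6*int n*(int n+1) + 2*(int n+1)^2) - int n * F1 n n"
    using t by linarith
  have b0: "BB n = 16 * int n * C * SS n" unfolding BB_def C_def by simp
  have "BB (Suc n) + BB n = 16 * C * (2*(2*int n+1)*SS (Suc n) + int n * SS n)"
    unfolding b1 b0 by (simp add: algebra_simps)
  also have "\<dots> = 16 * C * (C^4 * (5*int n^2 + 6*int n*(int n+1) + 2*(int n+1)^2)) - C * (16 * (int n * F1 n n))"
    unfolding t' by (simp add: algebra_simps)
  also have "\<dots> = C^5 * (205 * int n^2 + 160 * int n + 32)"
    unfolding ff by algebra
  finally show ?thesis unfolding C_def .
qed

lemma AB: "A n = BB n"
proof (induction n)
  case 0 thus ?case by (simp add: A_def BB_def)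
next
  case (Suc n)
  thus ?case using Arec[of n] Brec[of n] by simp
qed


definition F2 :: "nat \<Rightarrow> nat \<Rightarrow> int" where
  "F2 n j = (-1)^j * int ((2*n-1) choose j) * int ((n+j-1) choose j)^2"

definition LL :: "nat \<Rightarrow> nat \<Rightarrow> int" where
  "LL n m = (120*int n+44)*int n + (84*int n+32)*(int m+1)"

lemma poly2: "2*x*(m+1)^3*((120*x+44)*x + (84*x+32)*(m+1))
   - 32*(2*x+1)^2*(2*x*(2*x+1)*(x+m+1)^2) + 8*x^2*((2*x-1-m)*(2*x-m)*x^2)
   = -(2*x*(2*x-m)*(x+m+1)^2*((120*x+44)*x + (84*x+32)*(m+2)))"
  for x m :: int
  by algebra

lemma tel2: "m \<le> n \<Longrightarrow> 1 \<le> n \<Longrightarrow>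
  (\<Sum>j<Suc m. -32*(2*int n+1)^2 * F2 (Suc n) j + 8*int n^2 * F2 n j)
   = (-1)^(m+1) * int ((2*n) choose m) * int ((n+m) choose m)^2 * LL n m"
proof (induction m)
  case 0
  then show ?case by (simp add: F2_def LL_def algebra_simps power2_eq_square)
next
  case (Suc m)
  hence mn: "m < n" and n1: "1 \<le> n" by auto
  define f where "f = int ((2*n) choose m)"
  define g where "g = int ((2*n) choose Suc m)"
  define d where "d = int ((2*n-1) choose m)"
  define e where "e = int ((2*n-1) choose Suc m)"
  define t where "t = int ((Suc (2*n)) choose Suc m)"
  define c where "c = int ((n+m) choose m)"
  define b where "b = int ((Suc (n+m)) choose Suc m)"
  define b' where "b' = int ((n+m) choose Suc m)"
  define M where "M = int m + 1"
  define x where "x = int n"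
  have R4: "M * t = (2*x+1) * f"
    using binS[of m "2*n"] unfolding M_def t_def f_def x_def by (simp del: binomial_Suc_Suc add: algebra_simps)
  have R3: "M * g = (2*x - int m) * f"
    using binL[of m "2*n"] unfolding M_def g_def f_def x_def by (simp add: algebra_simps)
  have s2: "Suc (2*n-1) = 2*n" using n1 by simp
  have R2: "M * g = 2*x * d"
    using binS[of m "2*n-1"] unfolding M_def g_def d_def x_def s2 by (simp del: binomial_Suc_Suc add: algebra_simps)
  have i2: "int (2*n-1) = 2*x - 1" using n1 unfolding x_def by simp
  have R1: "M * e = (2*x - 1 - int m) * d"
    using binL[of m "2*n-1"] unfolding M_def e_def d_def i2 by (simp add: algebra_simps)
  have ea: "M * b = (x + int m + 1) * c"
    using binS[of m "n+m"] unfolding M_def b_def c_def x_def by (simp del: binomial_Suc_Suc add: algebra_simps)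
  have eb: "M * b' = x * c"
    using binL[of m "n+m"] unfolding M_def b'_def c_def x_def by (simp add: algebra_simps)
  define L0 where "L0 = (120*x+44)*x + (84*x+32)*M"
  define L1 where "L1 = (120*x+44)*x + (84*x+32)*(M+1)"
  have Mpos: "M > 0" "x > 0" unfolding M_def x_def using n1 by auto
  have core: "f*c^2*L0 - 32*(2*x+1)^2*(t*b^2) + 8*x^2*(e*b'^2) = -(g*b^2*L1)"
  proof -
    have k1: "2*x*M^3 * (t*b^2) = 2*x*(2*x+1)*(x+int m+1)^2 * (f*c^2)"
    proof -
      have "2*x*M^3 * (t*b^2) = 2*x*(M*t)*(M*b)^2" by (simp add: algebra_simps power2_eq_square power3_eq_cube)
      thus ?thesis unfolding R4 ea by (simp add: algebra_simps power2_eq_square)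
    qed
    have de: "2*x*M*e = (2*x-1-int m)*(2*x-int m)*f"
    proof -
      have "2*x*M*e = 2*x*(M*e)" by simp
      also have "\<dots> = (2*x-1-int m)*(2*x*d)" unfolding R1 by (simp add: algebra_simps)
      also have "\<dots> = (2*x-1-int m)*((2*x - int m) * f)" using R2 R3 by simp
      finally show ?thesis by simp
    qed
    have k2: "2*x*M^3 * (e*b'^2) = (2*x-1-int m)*(2*x-int m)*x^2 * (f*c^2)"
    proof -
      have "2*x*M^3 * (e*b'^2) = (2*x*M*e)*(M*b')^2" by (simp add: algebra_simps power2_eq_square power3_eq_cube)
      thus ?thesis unfolding de eb by (simp add: algebra_simps power2_eq_square)
    qed
    have k3: "2*x*M^3 * (g*b^2) = 2*x*(2*x-int m)*(x+int m+1)^2 * (f*c^2)"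
    proof -
      have "2*x*M^3 * (g*b^2) = 2*x*(M*g)*(M*b)^2" by (simp add: algebra_simps power2_eq_square power3_eq_cube)
      thus ?thesis unfolding R3 ea by (simp add: algebra_simps power2_eq_square)
    qed
    have "2*x*M^3 * (f*c^2*L0 - 32*(2*x+1)^2*(t*b^2) + 8*x^2*(e*b'^2))
        = f*c^2*(2*x*M^3*L0) - 32*(2*x+1)^2*(2*x*M^3 * (t*b^2)) + 8*x^2*(2*x*M^3 * (e*b'^2))"
      by (simp add: algebra_simps)
    also have "\<dots> = f*c^2*(2*x*(int m+1)^3*((120*x+44)*x + (84*x+32)*(int m+1))
   - 32*(2*x+1)^2*(2*x*(2*x+1)*(x+int m+1)^2) + 8*x^2*((2*x-1-int m)*(2*x-int m)*x^2))"
      unfolding k1 k2 by (simp add: L0_def M_def algebra_simps)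
    also have "\<dots> = f*c^2*(-(2*x*(2*x-int m)*(x+int m+1)^2*((120*x+44)*x + (84*x+32)*(int m+2))))"
      by (simp only: poly2)
    also have "\<dots> = -(L1 * (2*x*M^3 * (g*b^2)))"
      unfolding k3 by (simp add: L1_def M_def algebra_simps)
    also have "\<dots> = 2*x*M^3 * (-(g*b^2*L1))" by (simp add: algebra_simps)
    finally have h: "(2*x*M^3) * (f*c^2*L0 - 32*(2*x+1)^2*(t*b^2) + 8*x^2*(e*b'^2)) = (2*x*M^3) * (-(g*b^2*L1))" .
    have "2*x*M^3 \<noteq> 0" using Mpos by simp
    thus ?thesis using h mult_left_cancel by blast
  qed
  have t1: "F2 (Suc n) (Suc m) = (-1)^(Suc m) * t * b^2"
    unfolding F2_def t_def b_def by simp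
  have t2: "F2 n (Suc m) = (-1)^(Suc m) * e * b'^2"
    unfolding F2_def e_def b'_def by simp
  have ih: "(\<Sum>j<Suc m. -32*(2*int n+1)^2 * F2 (Suc n) j + 8*int n^2 * F2 n j)
      = (-1)^(Suc m) * f * c^2 * L0"
    using Suc.IH mn n1 unfolding f_def c_def L0_def LL_def M_def x_def by simp
  have lh: "LL n (Suc m) = L1" unfolding LL_def L1_def M_def x_def by simp
  have gg: "int ((2*n) choose Suc m) = g" "int ((n + Suc m) choose Suc m) = b"
    unfolding g_def b_def by simp_all
  show ?case
    apply (subst sum.lessThan_Suc)
    unfolding ih t1 t2 lh gg
    using arg_cong[OF core, of "\<lambda>z. (-1)^m * z"] unfolding x_def[symmetric]
    by (simp add: algebra_simps)
qed


definition VV :: "nat \<Rightarrow> int" where "VV n = (\<Sum>j<n. F2 n j)"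
definition DD :: "nat \<Rightarrow> int" where
  "DD n = 8 * int n ^ 2 * int ((2*n) choose n) ^ 2 * ((-1)^(n-1) * VV n)"

lemma sgn_split: "j < n \<Longrightarrow> ((-1::int) ^ (n - 1 - j)) = (-1)^(n-1) * (-1)^j"
proof -
  assume j: "j < n"
  have e: "n - 1 = (n-1-j) + j" using j by simp
  have "(-1::int)^(n-1) = (-1)^(n-1-j) * (-1)^j" by (metis e power_add)
  hence "(-1::int)^(n-1) * (-1)^j = (-1)^(n-1-j) * ((-1)^j * (-1)^j)" by (simp add: algebra_simps)
  also have "(-1::int)^j * (-1)^j = 1" by (simp add: power_add[symmetric] flip: power_mult_distrib)
  finally show ?thesis by simp
qed

lemma reindex: "(\<Sum>k<n. (-1) ^ k * int ((2*n - 1) choose (n + k))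
                      * int ((2*n - k - 2) choose (n - k - 1)) ^ 2) = (-1)^(n-1) * VV n"
proof -
  have "(\<Sum>k<n. (-1) ^ k * int ((2*n - 1) choose (n + k))
                      * int ((2*n - k - 2) choose (n - k - 1)) ^ 2)
     = (\<Sum>j<n. (-1) ^ (n - Suc j) * int ((2*n - 1) choose (n + (n - Suc j)))
                      * int ((2*n - (n - Suc j) - 2) choose (n - (n - Suc j) - 1)) ^ 2)"
    unfolding lessThan_atLeast0 by (rule sum.atLeastLessThan_rev[where n=0, simplified])
  also have "\<dots> = (\<Sum>j<n. (-1)^(n-1) * F2 n j)"
  proof (rule sum.cong)
    fix j assume "j \<in> {..<n}"
    hence j: "j < n" by simp
    have a1: "n + (n - Suc j) = (2*n-1) - j" using j by simp
    have a2: "(2*n - 1) choose ((2*n-1) - j) = (2*n-1) choose j"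
      using j by (intro binomial_symmetric[symmetric]) simp
    have a3: "2*n - (n - Suc j) - 2 = n + j - 1" "n - (n - Suc j) - 1 = j" using j by auto
    show "(-1) ^ (n - Suc j) * int ((2*n - 1) choose (n + (n - Suc j)))
                      * int ((2*n - (n - Suc j) - 2) choose (n - (n - Suc j) - 1)) ^ 2 = (-1)^(n-1) * F2 n j"
      unfolding a1 a2 a3 F2_def using sgn_split[OF j] by simp
  qed simp
  finally show ?thesis unfolding VV_def by (simp add: sum_distrib_left)
qed

lemma Drec: "DD (Suc n) + DD n = int ((2*n) choose n)^5 * (205 * int n^2 + 160 * int n + 32)"
proof (cases "n = 0")
  case True thus ?thesis by (simp add: DD_def VV_def F2_def)
next
  case False
  hence n1: "1 \<le> n" by simp
  define C where "C = int ((2*n) choose n)"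
  define \<sigma> where "\<sigma> = ((-1::int)^n)"
  have ss: "\<sigma> * \<sigma> = 1" unfolding \<sigma>_def by (simp flip: power_mult_distrib)
  have sm: "(-1::int)^(n-1) = - \<sigma>"
  proof -
    obtain p where p: "n = Suc p" using n1 by (cases n) auto
    show ?thesis unfolding \<sigma>_def p by simp
  qed
  have s1: "(\<Sum>j<Suc n. -32*(2*int n+1)^2 * F2 (Suc n) j + 8*int n^2 * F2 n j)
      = -32*(2*int n+1)^2 * VV (Suc n) + 8*int n^2 * (VV n + F2 n n)"
    unfolding VV_def by (simp add: sum.distrib sum_subtractf distrib_left right_diff_distrib flip: sum_distrib_left)
  have C2: "int ((n+n) choose n) = C" unfolding C_def by (simp add: mult_2)
  have tt: "-32*(2*int n+1)^2 * VV (Suc n) + 8*int n^2 * (VV n + F2 n n)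
      = - \<sigma> * C * C^2 * LL n n"
  proof -
    have T: "(\<Sum>j<Suc n. -32*(2*int n+1)^2 * F2 (Suc n) j + 8*int n^2 * F2 n j) = (-1)^(n+1) * C * C^2 * LL n n"
      using tel2[of n n] n1 unfolding C2 C_def[symmetric] by simp
    have "(-1::int)^(n+1) = - \<sigma>" unfolding \<sigma>_def by simp
    thus ?thesis using T unfolding s1 by simp
  qed
  have hC: "C = 2 * int ((2*n-1) choose n)" unfolding C_def using n1 by (rule half)
  have nn: "n + n - 1 = 2*n - 1" by simp
  have f8: "8 * int n^2 * F2 n n = \<sigma> * int n^2 * C^3"
    unfolding F2_def hC nn \<sigma>_def by algebra
  have key: "32*(2*int n+1)^2 * VV (Suc n) - 8*int n^2 * VV n = \<sigma> * C^3 * (205 * int n^2 + 160 * int n + 32)"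
  proof -
    have "32*(2*int n+1)^2 * VV (Suc n) - 8*int n^2 * VV n
       = 8 * int n^2 * F2 n n + \<sigma> * C * C^2 * LL n n"
      using tt by (simp add: algebra_simps)
    also have "\<dots> = \<sigma> * C^3 * (205 * int n^2 + 160 * int n + 32)"
      unfolding f8 LL_def by algebra
    finally show ?thesis .
  qed
  have "DD (Suc n) = 8 * (int (Suc n) * int ((2*Suc n) choose Suc n))^2 * (\<sigma> * VV (Suc n))"
    unfolding DD_def \<sigma>_def by (simp add: power_mult_distrib)
  also have "\<dots> = 32*(2*int n+1)^2 * C^2 * \<sigma> * VV (Suc n)"
    unfolding cs C_def by (simp add: power_mult_distrib power2_eq_square algebra_simps)
  finally have d1: "DD (Suc n) = 32*(2*int n+1)^2 * C^2 * \<sigma> * VV (Suc n)" .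
  have d0: "DD n = - (8 * int n^2 * C^2 * \<sigma> * VV n)" unfolding DD_def sm C_def by simp
  have "DD (Suc n) + DD n = C^2 * \<sigma> * (32*(2*int n+1)^2 * VV (Suc n) - 8*int n^2 * VV n)"
    unfolding d1 d0 by (simp add: algebra_simps)
  also have "\<dots> = (\<sigma> * \<sigma>) * C^5 * (205 * int n^2 + 160 * int n + 32)"
    unfolding key by algebra
  finally show ?thesis unfolding ss C_def by simp
qed

lemma AD: "A n = DD n"
proof (induction n)
  case 0 thus ?case by (simp add: A_def DD_def)
next
  case (Suc n)
  thus ?case using Arec[of n] Drec[of n] by simp
qed

theorem theorem7:
  fixes n :: nat
  assumes "n \<ge> 1"
  shows "A n = 16 * int n * int ((2*n) choose n)
                 * (\<Sum>k<n. int ((n + k - 1) choose k) ^ 4 * (2 * int k + int n))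
       \<and> A n = 8 * int n ^ 2 * int ((2*n) choose n) ^ 2
                 * (\<Sum>k<n. (-1) ^ k * int ((2*n - 1) choose (n + k))
                      * int ((2*n - k - 2) choose (n - k - 1)) ^ 2)"
proof
  show "A n = 16 * int n * int ((2*n) choose n)
                 * (\<Sum>k<n. int ((n + k - 1) choose k) ^ 4 * (2 * int k + int n))"
    using AB[of n] unfolding BB_def SS_def F1_def .
  show "A n = 8 * int n ^ 2 * int ((2*n) choose n) ^ 2
                 * (\<Sum>k<n. (-1) ^ k * int ((2*n - 1) choose (n + k))
                      * int ((2*n - k - 2) choose (n - k - 1)) ^ 2)"
    unfolding reindex using AD[of n] unfolding DD_def by simp
qed

end
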